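(* Let $\mathfrak{S}=(\mathcal{X},\mathsf{S},\gamma,(\Lambda_{a})_{a\in\mathcal{A}})$ be a spectral decomposition system for the Euclidean space $\mathfrak{H}$, let $\varphi\colon\mathcal{X}\to\left]-\infty,+\infty\right]$ be proper and $\mathsf{S}$-invariant, and let $X\in\mathfrak{H}$. Then: (i) for every $Y\in\mathfrak{H}$, $Y\in\partial(\varphi\circ\gamma)(X)$ if and only if $\gamma(Y)\in\partial\varphi(\gamma(X))$ and there exists $a\in\mathcal{A}$ such that $X=\Lambda_a\gamma(X)$ and $Y=\Lambda_a\gamma(Y)$; (ii) $\partial(\varphi\circ\gamma)(X)=\{\Lambda_ay: y\in\partial\varphi(\gamma(X)),\ a\in\mathcal{A}_X\}$; (iii) $\partial(\varphi\circ\gamma)(X)$ is a singleton if and only if $\partial\varphi(\gamma(X))$ is a singleton.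
   Context: A Euclidean space is a finite-dimensional real inner product space; inner products are written $\langle\cdot,\cdot\rangle$ and norms $\|\cdot\|$. Let $\mathfrak{H}$ and $\mathcal{X}$ be Euclidean spaces, let $\mathsf{S}$ be a group acting on $\mathcal{X}$ by linear isometries, let $\gamma\colon\mathfrak{H}\to\mathcal{X}$, and let $(\Lambda_a)_{a\in\mathcal{A}}$ be a family of linear operators from $\mathcal{X}$ to $\mathfrak{H}$. The orbit of $x$ is $\mathsf{S}\cdot x=\{s\cdot x: s\in\mathsf{S}\}$; a map $f$ on $\mathcal{X}$ is $\mathsf{S}$-invariant if $f(s\cdot x)=f(x)$ for all $s,x$. The tuple is a spectral decomposition system for $\mathfrak{H}$ if: [A] every $\Lambda_a$ is an isometry; [B] there exists an $\mathsf{S}$-invariant $\tau\colon\mathcal{X}\to\mathcal{X}$ with $\tau(x)\in\mathsf{S}\cdot x$ for all $x$ and $\gamma\circ\Lambda_a=\tau$ for all $a$; [C] for every $X\in\mathfrak{H}$ there is $a$ with $X=\Lambda_a\gamma(X)$; [D] $\langle X,Y\rangle\leq\langle\gamma(X),\gamma(Y)\rangle$ for all $X,Y\in\mathfrak{H}$. For $X\in\mathfrak{H}$, $\mathcal{A}_X=\{a\in\mathcal{A}: X=\Lambda_a\gamma(X)\}$. A function is proper if it never takes $-\infty$ and is finite somewhere; the subdifferential of $f$ on a Euclidean space $\mathcal{H}$ is $\partial f(x)=\{y:\langle z-x,y\rangle+f(x)\leq f(z)\ \forall z\in\mathcal{H}\}$. *)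

theory Defs
  imports "HOL-Analysis.Analysis" "HOL-Library.Extended_Real"
begin

definition linear_isometric_action :: "('g::group_add \<Rightarrow> 'x::euclidean_space \<Rightarrow> 'x) \<Rightarrow> bool" where
  "linear_isometric_action act \<longleftrightarrow>
     act 0 = id \<and>
     (\<forall>g h. act (g + h) = act g \<circ> act h) \<and>
     (\<forall>g. linear (act g) \<and> (\<forall>x. norm (act g x) = norm x))"

definition orbit :: "('g \<Rightarrow> 'x \<Rightarrow> 'x) \<Rightarrow> 'x \<Rightarrow> 'x set" where
  "orbit act x = {act s x | s. True}"

definition S_invariant :: "('g \<Rightarrow> 'x \<Rightarrow> 'x) \<Rightarrow> ('x \<Rightarrow> 'b) \<Rightarrow> bool" where
  "S_invariant act f \<longleftrightarrow> (\<forall>s x. f (act s x) = f x)"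

definition spectral_decomposition_system ::
  "('g::group_add \<Rightarrow> 'x::euclidean_space \<Rightarrow> 'x) \<Rightarrow> ('h::euclidean_space \<Rightarrow> 'x)
   \<Rightarrow> 'a set \<Rightarrow> ('a \<Rightarrow> 'x \<Rightarrow> 'h) \<Rightarrow> bool" where
  "spectral_decomposition_system act \<gamma> A \<Lambda> \<longleftrightarrow>
     linear_isometric_action act \<and>
     (\<forall>a\<in>A. linear (\<Lambda> a) \<and> (\<forall>x. norm (\<Lambda> a x) = norm x)) \<and>
     (\<exists>\<tau>. S_invariant act \<tau> \<and> (\<forall>x. \<tau> x \<in> orbit act x) \<and> (\<forall>a\<in>A. \<gamma> \<circ> \<Lambda> a = \<tau>)) \<and>
     (\<forall>X. \<exists>a\<in>A. X = \<Lambda> a (\<gamma> X)) \<and>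
     (\<forall>X Y. inner X Y \<le> inner (\<gamma> X) (\<gamma> Y))"

definition A_of :: "'a set \<Rightarrow> ('a \<Rightarrow> 'x \<Rightarrow> 'h) \<Rightarrow> ('h \<Rightarrow> 'x) \<Rightarrow> 'h \<Rightarrow> 'a set" where
  "A_of A \<Lambda> \<gamma> X = {a\<in>A. X = \<Lambda> a (\<gamma> X)}"

definition proper_fun :: "('x \<Rightarrow> ereal) \<Rightarrow> bool" where
  "proper_fun f \<longleftrightarrow> (\<forall>x. f x \<noteq> -\<infinity>) \<and> (\<exists>x. f x \<noteq> \<infinity>)"

definition subdiff :: "('x::real_inner \<Rightarrow> ereal) \<Rightarrow> 'x \<Rightarrow> 'x set" where
  "subdiff f x = {y. \<forall>z. ereal (inner (z - x) y) + f x \<le> f z}"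

end

theory Submission
  imports Defs
begin

lemma lin_iso_inner:
  assumes "linear f" "\<And>x. norm (f x) = norm x"
  shows "inner (f x) (f y) = inner x y"
proof -
  have sq: "\<And>u. inner (f u) (f u) = inner u u"
    using assms(2) by (metis power2_norm_eq_inner)
  have "inner (f (x+y)) (f (x+y)) = inner (x+y) (x+y)" by (rule sq)
  hence "inner (f x + f y) (f x + f y) = inner (x+y) (x+y)"
    using linear_add[OF assms(1)] by simp
  thus ?thesis using sq[of x] sq[of y]
    by (simp add: inner_add inner_commute algebra_simps)
qed

lemma norm_mid_eq:
  fixes a b :: "'h::real_inner"
  assumes "norm a = c" "norm b = c" "norm (scaleR (1/2) (a+b)) = c"
  shows "a = b"
proof -
  have ia: "inner a a = c^2" and ib: "inner b b = c^2"
    using assms by (metis power2_norm_eq_inner)+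
  have "inner (scaleR (1/2) (a+b)) (scaleR (1/2) (a+b)) = c^2"
    using assms(3) by (metis power2_norm_eq_inner)
  hence "(inner a a + 2 * inner a b + inner b b) / 4 = c^2"
    by (simp add: inner_add inner_commute algebra_simps)
  hence "inner (a-b) (a-b) = 0" using ia ib
    by (simp add: inner_diff inner_commute algebra_simps)
  thus ?thesis by simp
qed

lemma subdiff_mid:
  assumes "y1 \<in> subdiff f x" "y2 \<in> subdiff f x"
  shows "scaleR (1/2) (y1+y2) \<in> subdiff f x"
  unfolding subdiff_def
proof (intro CollectI allI)
  fix z
  have e1: "ereal (inner (z - x) y1) + f x \<le> f z"
   and e2: "ereal (inner (z - x) y2) + f x \<le> f z"
    using assms unfolding subdiff_def by auto
  have m: "inner (z - x) (scaleR (1/2) (y1+y2)) = (inner (z-x) y1 + inner (z-x) y2)/2"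
    by (simp add: inner_add_right)
  show "ereal (inner (z - x) (scaleR (1/2) (y1+y2))) + f x \<le> f z"
  proof (cases "f x")
    case (real r)
    show ?thesis
    proof (cases "f z")
      case (real t)
      have a1: "inner (z-x) y1 + r \<le> t" using e1 real \<open>f x = ereal r\<close> by simp
      have a2: "inner (z-x) y2 + r \<le> t" using e2 real \<open>f x = ereal r\<close> by simp
      have "inner (z - x) (scaleR (1/2) (y1+y2)) + r \<le> t"
      proof -
        have "\<And>p q::real. p + r \<le> t \<Longrightarrow> q + r \<le> t \<Longrightarrow> (p+q)/2 + r \<le> t" by argo
        thus ?thesis unfolding m using a1 a2 by blast
      qed
      then show ?thesis using real \<open>f x = ereal r\<close> by simp
    next
      case PInf then show ?thesis by simp
    next
      case MInf then show ?thesis using e1 \<open>f x = ereal r\<close> by simp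
    qed
  next
    case PInf then show ?thesis using e1 by simp
  next
    case MInf then show ?thesis by simp
  qed
qed

locale sds =
  fixes act :: "'g::group_add \<Rightarrow> 'x::euclidean_space \<Rightarrow> 'x"
    and \<gamma> :: "'h::euclidean_space \<Rightarrow> 'x"
    and A :: "'a set"
    and \<Lambda> :: "'a \<Rightarrow> 'x \<Rightarrow> 'h"
    and \<tau> :: "'x \<Rightarrow> 'x"
  assumes act0: "act 0 = id"
    and act_add: "\<And>g h. act (g+h) = act g \<circ> act h"
    and act_lin: "\<And>g. linear (act g)"
    and act_norm: "\<And>g x. norm (act g x) = norm x"
    and L_lin: "\<And>a. a\<in>A \<Longrightarrow> linear (\<Lambda> a)"
    and L_norm: "\<And>a x. a\<in>A \<Longrightarrow> norm (\<Lambda> a x) = norm x"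
    and tau_orb: "\<And>x. \<exists>s. \<tau> x = act s x"
    and gL: "\<And>a x. a\<in>A \<Longrightarrow> \<gamma> (\<Lambda> a x) = \<tau> x"
    and C: "\<And>X. \<exists>a\<in>A. X = \<Lambda> a (\<gamma> X)"
    and D: "\<And>X Y. inner X Y \<le> inner (\<gamma> X) (\<gamma> Y)"
begin

lemma act_inner: "inner (act s u) (act s v) = inner u v"
  by (rule lin_iso_inner[OF act_lin act_norm])

lemma act_inv: "act s (act (-s) u) = u"
proof -
  have "act s (act (-s) u) = act (s + -s) u" using act_add[of s "-s"] by simp
  thus ?thesis using act0 by simp
qed

lemma L_inner: "a\<in>A \<Longrightarrow> inner (\<Lambda> a u) (\<Lambda> a v) = inner u v"
  by (rule lin_iso_inner[OF L_lin L_norm])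

lemma norm_gamma: "norm (\<gamma> Z) = norm Z"
proof -
  obtain a where "a\<in>A" "Z = \<Lambda> a (\<gamma> Z)" using C by blast
  thus ?thesis using L_norm by metis
qed

lemma inner_gamma_self: "inner (\<gamma> Z) (\<gamma> Z) = inner Z Z"
  using norm_gamma by (metis power2_norm_eq_inner)

lemma tau_fix: "\<tau> (\<gamma> Y) = \<gamma> Y"
proof -
  obtain a where "a\<in>A" "Y = \<Lambda> a (\<gamma> Y)" using C by blast
  thus ?thesis using gL by metis
qed

lemma A_ne: "\<exists>a. a \<in> A" using C by blast

lemma key:
  assumes eq: "inner X Y = inner (\<gamma> X) (\<gamma> Y)"
  shows "\<exists>a\<in>A. X = \<Lambda> a (\<gamma> X) \<and> Y = \<Lambda> a (\<gamma> Y)"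
proof -
  obtain a where a: "a\<in>A" "X+Y = \<Lambda> a (\<gamma> (X+Y))" using C by blast
  define U where "U = \<Lambda> a (\<gamma> X)"
  define V where "V = \<Lambda> a (\<gamma> Y)"
  have h1: "inner X (X+Y) \<le> inner (\<gamma> X) (\<gamma> (X+Y))" by (rule D)
  have h2: "inner Y (X+Y) \<le> inner (\<gamma> Y) (\<gamma> (X+Y))" by (rule D)
  have n1: "inner (\<gamma> (X+Y)) (\<gamma> (X+Y)) = inner (X+Y) (X+Y)" by (rule inner_gamma_self)
  have nX: "inner (\<gamma> X) (\<gamma> X) = inner X X" by (rule inner_gamma_self)
  have nY: "inner (\<gamma> Y) (\<gamma> Y) = inner Y Y" by (rule inner_gamma_self)
  have "inner (\<gamma> (X+Y) - (\<gamma> X + \<gamma> Y)) (\<gamma> (X+Y) - (\<gamma> X + \<gamma> Y)) \<le> 0"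
    using h1 h2 n1 nX nY eq
    by (simp add: inner_add inner_diff inner_commute algebra_simps)
  hence g: "\<gamma> (X+Y) = \<gamma> X + \<gamma> Y"
    by (metis eq_iff_diff_eq_0 inner_gt_zero_iff not_le)
  have UV: "X + Y = U + V" using a g linear_add[OF L_lin[OF a(1)]] U_def V_def by simp
  have gU: "\<gamma> U = \<gamma> X" using gL[OF a(1)] tau_fix U_def by simp
  have gV: "\<gamma> V = \<gamma> Y" using gL[OF a(1)] tau_fix V_def by simp
  have i1: "inner X V \<le> inner (\<gamma> X) (\<gamma> Y)" using D[of X V] gV by simp
  have i2: "inner U Y \<le> inner (\<gamma> X) (\<gamma> Y)" using D[of U Y] gU by simp
  have i3: "inner U V = inner (\<gamma> X) (\<gamma> Y)" using L_inner[OF a(1)] U_def V_def by simp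
  have XU: "X - U = V - Y" using UV by (simp add: algebra_simps)
  have "inner (X - U) (X - U) = inner (X - U) (V - Y)" using XU by simp
  also have "\<dots> = inner X V - inner X Y - inner U V + inner U Y"
    by (simp add: inner_diff)
  finally have "inner (X - U) (X - U) \<le> 0" using i1 i2 i3 eq by linarith
  hence "X = U" by (metis eq_iff_diff_eq_0 inner_gt_zero_iff not_le)
  moreover hence "Y = V" using UV by simp
  ultimately show ?thesis using a(1) U_def V_def by blast
qed

lemma phi_tau: "S_invariant act \<phi> \<Longrightarrow> \<phi> (\<tau> x) = \<phi> x"
  using tau_orb[of x] unfolding S_invariant_def by metis

lemma sub_bwd:
  assumes y: "y \<in> subdiff \<phi> (\<gamma> X)" and a: "a\<in>A" "X = \<Lambda> a (\<gamma> X)"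
    and inv: "S_invariant act \<phi>"
  shows "\<Lambda> a y \<in> subdiff (\<phi> \<circ> \<gamma>) X"
  unfolding subdiff_def
proof (intro CollectI allI)
  fix Z
  obtain s where s: "\<tau> y = act s y" using tau_orb by blast
  have "inner (Z - X) (\<Lambda> a y) = inner Z (\<Lambda> a y) - inner (\<Lambda> a (\<gamma> X)) (\<Lambda> a y)"
    using a by (metis inner_diff_left)
  also have "\<dots> = inner Z (\<Lambda> a y) - inner (\<gamma> X) y" using L_inner[OF a(1)] by simp
  also have "\<dots> \<le> inner (\<gamma> Z) (\<gamma> (\<Lambda> a y)) - inner (\<gamma> X) y" using D by simp
  also have "inner (\<gamma> Z) (\<gamma> (\<Lambda> a y)) = inner (act s (act (-s) (\<gamma> Z))) (act s y)"
    using gL[OF a(1)] s act_inv by simp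
  also have "\<dots> = inner (act (-s) (\<gamma> Z)) y" by (rule act_inner)
  finally have r: "inner (Z - X) (\<Lambda> a y) \<le> inner (act (-s) (\<gamma> Z) - \<gamma> X) y"
    by (simp add: inner_diff_left)
  have "ereal (inner (act (-s) (\<gamma> Z) - \<gamma> X) y) + \<phi> (\<gamma> X) \<le> \<phi> (act (-s) (\<gamma> Z))"
    using y unfolding subdiff_def by blast
  also have "\<phi> (act (-s) (\<gamma> Z)) = \<phi> (\<gamma> Z)" using inv unfolding S_invariant_def by simp
  finally have "ereal (inner (act (-s) (\<gamma> Z) - \<gamma> X) y) + \<phi> (\<gamma> X) \<le> \<phi> (\<gamma> Z)" .
  moreover have "ereal (inner (Z - X) (\<Lambda> a y)) + \<phi> (\<gamma> X) \<le> ereal (inner (act (-s) (\<gamma> Z) - \<gamma> X) y) + \<phi> (\<gamma> X)"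
    using r by (intro add_right_mono) simp
  ultimately show "ereal (inner (Z - X) (\<Lambda> a y)) + (\<phi> \<circ> \<gamma>) X \<le> (\<phi> \<circ> \<gamma>) Z"
    by simp
qed

lemma sub_fwd:
  assumes Y: "Y \<in> subdiff (\<phi> \<circ> \<gamma>) X" and pr: "proper_fun \<phi>" and inv: "S_invariant act \<phi>"
  shows "\<gamma> Y \<in> subdiff \<phi> (\<gamma> X) \<and> (\<exists>a\<in>A. X = \<Lambda> a (\<gamma> X) \<and> Y = \<Lambda> a (\<gamma> Y))"
proof -
  have YZ: "\<And>Z. ereal (inner (Z - X) Y) + \<phi> (\<gamma> X) \<le> \<phi> (\<gamma> Z)"
    using Y unfolding subdiff_def by auto
  have fin: "\<phi> (\<gamma> X) \<noteq> \<infinity>"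
  proof
    assume inf: "\<phi> (\<gamma> X) = \<infinity>"
    obtain z where z: "\<phi> z \<noteq> \<infinity>" using pr unfolding proper_fun_def by blast
    obtain b where b: "b \<in> A" using A_ne by blast
    have "\<phi> (\<gamma> (\<Lambda> b z)) = \<infinity>" using YZ[of "\<Lambda> b z"] inf by simp
    moreover have "\<phi> (\<gamma> (\<Lambda> b z)) = \<phi> z" using gL[OF b] phi_tau[OF inv] by simp
    ultimately show False using z by simp
  qed
  moreover have "\<phi> (\<gamma> X) \<noteq> -\<infinity>" using pr unfolding proper_fun_def by blast
  ultimately obtain r where r: "\<phi> (\<gamma> X) = ereal r" by (cases "\<phi> (\<gamma> X)") auto
  obtain b where b: "b\<in>A" "Y = \<Lambda> b (\<gamma> Y)" using C by blast
  have "\<gamma> (\<Lambda> b (\<gamma> X)) = \<gamma> X" using gL[OF b(1)] tau_fix by simp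
  hence "ereal (inner (\<Lambda> b (\<gamma> X) - X) Y) + ereal r \<le> ereal r"
    using YZ[of "\<Lambda> b (\<gamma> X)"] r by simp
  hence "inner (\<Lambda> b (\<gamma> X) - X) Y \<le> 0" by simp
  moreover have "inner (\<Lambda> b (\<gamma> X)) Y = inner (\<gamma> X) (\<gamma> Y)"
    using L_inner[OF b(1)] b(2) by metis
  ultimately have "inner X Y = inner (\<gamma> X) (\<gamma> Y)" using D[of X Y]
    by (simp add: inner_diff_left)
  then obtain a where a: "a\<in>A" "X = \<Lambda> a (\<gamma> X)" "Y = \<Lambda> a (\<gamma> Y)" using key by blast
  have "\<gamma> Y \<in> subdiff \<phi> (\<gamma> X)"
    unfolding subdiff_def
  proof (intro CollectI allI)
    fix z
    have "inner (\<Lambda> a z - X) Y = inner (\<Lambda> a (z - \<gamma> X)) (\<Lambda> a (\<gamma> Y))"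
      using a linear_diff[OF L_lin[OF a(1)]] by metis
    also have "\<dots> = inner (z - \<gamma> X) (\<gamma> Y)" by (rule L_inner[OF a(1)])
    finally have "inner (\<Lambda> a z - X) Y = inner (z - \<gamma> X) (\<gamma> Y)" .
    moreover have "\<phi> (\<gamma> (\<Lambda> a z)) = \<phi> z" using gL[OF a(1)] phi_tau[OF inv] by simp
    ultimately show "ereal (inner (z - \<gamma> X) (\<gamma> Y)) + \<phi> (\<gamma> X) \<le> \<phi> z"
      using YZ[of "\<Lambda> a z"] by simp
  qed
  thus ?thesis using a by blast
qed

lemma part_i:
  assumes pr: "proper_fun \<phi>" and inv: "S_invariant act \<phi>"
  shows "Y \<in> subdiff (\<phi> \<circ> \<gamma>) X \<longleftrightarrow>
     (\<gamma> Y \<in> subdiff \<phi> (\<gamma> X) \<and> (\<exists>a\<in>A. X = \<Lambda> a (\<gamma> X) \<and> Y = \<Lambda> a (\<gamma> Y)))"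
  using sub_fwd[OF _ pr inv] sub_bwd[OF _ _ _ inv] by metis

lemma part_ii:
  assumes pr: "proper_fun \<phi>" and inv: "S_invariant act \<phi>"
  shows "subdiff (\<phi> \<circ> \<gamma>) X = {\<Lambda> a y | a y. y \<in> subdiff \<phi> (\<gamma> X) \<and> a \<in> A_of A \<Lambda> \<gamma> X}"
  using sub_fwd[OF _ pr inv] sub_bwd[OF _ _ _ inv] unfolding A_of_def by blast

lemma part_iii:
  assumes pr: "proper_fun \<phi>" and inv: "S_invariant act \<phi>"
  shows "is_singleton (subdiff (\<phi> \<circ> \<gamma>) X) \<longleftrightarrow> is_singleton (subdiff \<phi> (\<gamma> X))"
proof
  obtain a where a: "a\<in>A" "X = \<Lambda> a (\<gamma> X)" using C by blast
  {
    assume "is_singleton (subdiff (\<phi> \<circ> \<gamma>) X)"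
    then obtain Y0 where Y0: "subdiff (\<phi> \<circ> \<gamma>) X = {Y0}" by (auto simp: is_singleton_def)
    hence ne: "\<gamma> Y0 \<in> subdiff \<phi> (\<gamma> X)" using sub_fwd[OF _ pr inv] by blast
    have "\<And>y1 y2. y1 \<in> subdiff \<phi> (\<gamma> X) \<Longrightarrow> y2 \<in> subdiff \<phi> (\<gamma> X) \<Longrightarrow> y1 = y2"
    proof -
      fix y1 y2 assume "y1 \<in> subdiff \<phi> (\<gamma> X)" "y2 \<in> subdiff \<phi> (\<gamma> X)"
      hence "\<Lambda> a y1 \<in> {Y0}" "\<Lambda> a y2 \<in> {Y0}" using sub_bwd[OF _ a inv] Y0 by blast+
      hence "\<Lambda> a y1 = \<Lambda> a y2" by simp
      hence "norm (\<Lambda> a (y1 - y2)) = 0" using linear_diff[OF L_lin[OF a(1)]] by simp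
      thus "y1 = y2" using L_norm[OF a(1)] by simp
    qed
    thus "is_singleton (subdiff \<phi> (\<gamma> X))" using ne by (intro is_singletonI') auto
  }
  {
    assume "is_singleton (subdiff \<phi> (\<gamma> X))"
    then obtain y0 where y0: "subdiff \<phi> (\<gamma> X) = {y0}" by (auto simp: is_singleton_def)
    have ne: "\<Lambda> a y0 \<in> subdiff (\<phi> \<circ> \<gamma>) X" using sub_bwd[OF _ a inv] y0 by blast
    have nrm: "norm Y = norm y0" if "Y \<in> subdiff (\<phi> \<circ> \<gamma>) X" for Y
    proof -
      have "\<gamma> Y = y0" using sub_fwd[OF that pr inv] y0 by blast
      thus ?thesis using norm_gamma[of Y] by simp
    qed
    have "\<And>Y1 Y2. Y1 \<in> subdiff (\<phi> \<circ> \<gamma>) X \<Longrightarrow> Y2 \<in> subdiff (\<phi> \<circ> \<gamma>) X \<Longrightarrow> Y1 = Y2"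
      using nrm subdiff_mid norm_mid_eq by metis
    thus "is_singleton (subdiff (\<phi> \<circ> \<gamma>) X)" using ne by (intro is_singletonI') auto
  }
qed

end

theorem proposition5p5:
  fixes act :: "'g::group_add \<Rightarrow> 'x::euclidean_space \<Rightarrow> 'x"
    and \<gamma> :: "'h::euclidean_space \<Rightarrow> 'x"
    and A :: "'a set"
    and \<Lambda> :: "'a \<Rightarrow> 'x \<Rightarrow> 'h"
    and \<phi> :: "'x \<Rightarrow> ereal"
    and X :: 'h
  assumes "spectral_decomposition_system act \<gamma> A \<Lambda>"
    and "proper_fun \<phi>"
    and "S_invariant act \<phi>"
  shows "(\<forall>Y. Y \<in> subdiff (\<phi> \<circ> \<gamma>) X \<longleftrightarrow>
              (\<gamma> Y \<in> subdiff \<phi> (\<gamma> X) \<and> (\<exists>a\<in>A. X = \<Lambda> a (\<gamma> X) \<and> Y = \<Lambda> a (\<gamma> Y))))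
       \<and> subdiff (\<phi> \<circ> \<gamma>) X = {\<Lambda> a y | a y. y \<in> subdiff \<phi> (\<gamma> X) \<and> a \<in> A_of A \<Lambda> \<gamma> X}
       \<and> (is_singleton (subdiff (\<phi> \<circ> \<gamma>) X) \<longleftrightarrow> is_singleton (subdiff \<phi> (\<gamma> X)))"
proof -
  obtain \<tau> where t: "S_invariant act \<tau>" "\<forall>x. \<tau> x \<in> orbit act x" "\<forall>a\<in>A. \<gamma> \<circ> \<Lambda> a = \<tau>"
    using assms(1) unfolding spectral_decomposition_system_def by blast
  have F: "act 0 = id" "\<And>g h. act (g+h) = act g \<circ> act h" "\<And>g. linear (act g)"
      "\<And>g x. norm (act g x) = norm x"
      using assms(1) unfolding spectral_decomposition_system_def linear_isometric_action_def by auto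
  have G: "\<And>a. a\<in>A \<Longrightarrow> linear (\<Lambda> a)" "\<And>a x. a\<in>A \<Longrightarrow> norm (\<Lambda> a x) = norm x"
      "\<And>X. \<exists>a\<in>A. X = \<Lambda> a (\<gamma> X)" "\<And>X Y. inner X Y \<le> inner (\<gamma> X) (\<gamma> Y)"
      using assms(1) unfolding spectral_decomposition_system_def by auto
  have H: "\<And>x. \<exists>s. \<tau> x = act s x" using t(2) unfolding orbit_def by blast
  have K: "\<And>a x. a\<in>A \<Longrightarrow> \<gamma> (\<Lambda> a x) = \<tau> x" using t(3) by (metis comp_apply)
  have "sds act \<gamma> A \<Lambda> \<tau>"
    by (rule sds.intro) (use F G H K in blast)+
  then interpret sds act \<gamma> A \<Lambda> \<tau> .
  show ?thesis using part_i[OF assms(2,3)] part_ii[OF assms(2,3)] part_iii[OF assms(2,3)] by blast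
qed

end
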